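(* Let $\mathcal{STAB}$ be the set of channels $\rho\mapsto U\rho U^\dagger$ with $U$ an element of the $n$-qubit Clifford group. Then there is a function $\eta(n)\to0$ as $n\to\infty$ such that for every $m$ and every sample $S=(z_1,\ldots,z_m)$ with $z_i\in\mathbb{F}_2^n\times\mathbb{F}_2^n$, \[ \hat{R}_S(\mathcal{F}(\mathcal{STAB}))\le 4\,\frac{(1+\eta(n))\,n}{\sqrt m}\,\max_{\Phi\in\mathcal{STAB}}\|\vec f_\Phi\|_\infty, \] where $\vec f_\Phi=(f_\Phi(z_1),\ldots,f_\Phi(z_m))$.
   Context: For a channel $\Phi$ on $n$ qubits, $f_\Phi(x,y)=\mathrm{Tr}[\Phi(|x\rangle\langle x|)\,|y\rangle\langle y|]$ for $x,y\in\mathbb{F}_2^n$; $\mathcal{F}(\Omega)=\{f_\Phi:\Phi\in\Omega\}$. Empirical Rademacher complexity: $\hat{R}_S(\mathcal{G})=\mathbb{E}_{\epsilon}[\sup_{g\in\mathcal{G}}\frac1m\sum_i\epsilon_i g(z_i)]$, $\epsilon_i$ i.i.d. uniform on $\{\pm1\}$. *)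

theory Defs
  imports Complex_Main "HOL-Library.FuncSet" "Jordan_Normal_Form.Matrix"
begin

(* Computational basis of n qubits: x \<in> F_2^n encoded as the natural number x < 2^n
   (bit i of x = i-th coordinate). Operators are 2^n x 2^n complex matrices. *)

definition dag :: "complex mat \<Rightarrow> complex mat" where
  "dag U = mat (dim_col U) (dim_row U) (\<lambda>(i,j). cnj (U $$ (j,i)))"

definition bdot :: "nat \<Rightarrow> nat \<Rightarrow> nat \<Rightarrow> nat" where
  "bdot n b x = card {i. i < n \<and> bit (and b x) i}"

(* Pauli operator X^a Z^b :  |x> \<mapsto> (-1)^(b.x) |x xor a> *)
definition pauli :: "nat \<Rightarrow> nat \<Rightarrow> nat \<Rightarrow> complex mat" where
  "pauli n a b = mat (2^n) (2^n)
     (\<lambda>(y,x). if y = xor x a then (-1) ^ bdot n b x else 0)"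

definition pauli_group :: "nat \<Rightarrow> complex mat set" where
  "pauli_group n = {(\<i> ^ k) \<cdot>\<^sub>m pauli n a b | k a b. k < 4 \<and> a < 2^n \<and> b < 2^n}"

definition unitary :: "nat \<Rightarrow> complex mat \<Rightarrow> bool" where
  "unitary N U \<longleftrightarrow> U \<in> carrier_mat N N \<and> U * dag U = 1\<^sub>m N \<and> dag U * U = 1\<^sub>m N"

definition clifford :: "nat \<Rightarrow> complex mat set" where
  "clifford n = {U. unitary (2^n) U \<and> (\<forall>P \<in> pauli_group n. U * P * dag U \<in> pauli_group n)}"

definition mtrace :: "complex mat \<Rightarrow> complex" where
  "mtrace A = (\<Sum>i<dim_row A. A $$ (i,i))"

definition proj :: "nat \<Rightarrow> nat \<Rightarrow> complex mat" where
  "proj n x = mat (2^n) (2^n) (\<lambda>(i,j). if i = x \<and> j = x then 1 else 0)"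

(* f_Phi(x,y) = Tr[Phi(|x><x|) |y><y|] for the channel Phi(rho) = U rho U^dagger *)
definition fch :: "nat \<Rightarrow> complex mat \<Rightarrow> nat \<times> nat \<Rightarrow> real" where
  "fch n U z = Re (mtrace (U * proj n (fst z) * dag U * proj n (snd z)))"

definition F_stab :: "nat \<Rightarrow> (nat \<times> nat \<Rightarrow> real) set" where
  "F_stab n = fch n ` clifford n"

definition emp_rademacher :: "(nat \<times> nat) list \<Rightarrow> (nat \<times> nat \<Rightarrow> real) set \<Rightarrow> real" where
  "emp_rademacher zs G =
     (\<Sum>\<epsilon> \<in> {..<length zs} \<rightarrow>\<^sub>E {-1, 1::real}.
        (SUP g\<in>G. (1 / real (length zs)) * (\<Sum>i<length zs. \<epsilon> i * g (zs ! i))))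
     / 2 ^ length zs"

definition sup_norm_on :: "(nat \<times> nat) list \<Rightarrow> (nat \<times> nat \<Rightarrow> real) \<Rightarrow> real" where
  "sup_norm_on zs g = Max ((\<lambda>i. \<bar>g (zs ! i)\<bar>) ` {..<length zs})"

end

theory Submission
  imports Defs "HOL-Probability.Hoeffding"
begin

lemma mult_entry:
  fixes A B :: "complex mat"
  assumes "A \<in> carrier_mat N N" "B \<in> carrier_mat N N" "i < N" "j < N"
  shows "(A * B) $$ (i,j) = (\<Sum>k<N. A $$ (i,k) * B $$ (k,j))"
  using assms by (simp add: scalar_prod_def atLeast0LessThan)

lemma dag_carrier: "U \<in> carrier_mat N N \<Longrightarrow> dag U \<in> carrier_mat N N"
  by (simp add: dag_def)

lemma dag_entry: "U \<in> carrier_mat N N \<Longrightarrow> i < N \<Longrightarrow> j < N \<Longrightarrow> dag U $$ (i,j) = cnj (U $$ (j,i))"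
  by (simp add: dag_def)

lemma proj_carrier: "proj n x \<in> carrier_mat (2^n) (2^n)"
  by (simp add: proj_def)

lemma pauli_carrier: "pauli n a b \<in> carrier_mat (2^n) (2^n)"
  by (simp add: pauli_def)

lemma proj_entry: "i < 2^n \<Longrightarrow> j < 2^n \<Longrightarrow> proj n x $$ (i,j) = (if i = x \<and> j = x then 1 else 0)"
  by (simp add: proj_def)

lemma pauli_entry: "y < 2^n \<Longrightarrow> x < 2^n \<Longrightarrow> pauli n a b $$ (y,x) = (if y = xor x a then (-1) ^ bdot n b x else 0)"
  by (simp add: pauli_def)

lemma fch_formula:
  assumes U: "U \<in> carrier_mat (2^n) (2^n)"
  shows "fch n U (x,y) = (if x < 2^n \<and> y < 2^n then (cmod (U $$ (y,x)))^2 else 0)"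
proof -
  let ?N = "(2::nat)^n"
  have c1: "U * proj n x \<in> carrier_mat ?N ?N" using U proj_carrier by auto
  have e1: "(U * proj n x) $$ (i,j) = (if j = x then U $$ (i,x) else 0)" if "i < ?N" "j < ?N" for i j
    using that U by (auto simp: mult_entry[OF U proj_carrier] proj_entry if_distrib[of "\<lambda>t. _ * t"] cong: if_cong)
  have c2: "U * proj n x * dag U \<in> carrier_mat ?N ?N" by (rule mult_carrier_mat[OF c1 dag_carrier[OF U]])
  have e2: "(U * proj n x * dag U) $$ (i,j) = (if x < ?N then U $$ (i,x) * cnj (U $$ (j,x)) else 0)" if "i < ?N" "j < ?N" for i j
  proof -
    have "(U * proj n x * dag U) $$ (i,j) = (\<Sum>k<?N. (U * proj n x) $$ (i,k) * dag U $$ (k,j))"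
      by (rule mult_entry[OF c1 dag_carrier[OF U] that])
    also have "\<dots> = (\<Sum>k<?N. if k = x then U $$ (i,x) * cnj (U $$ (j,x)) else 0)"
      using that U by (intro sum.cong) (auto simp: e1 dag_entry)
    also have "\<dots> = (if x < ?N then U $$ (i,x) * cnj (U $$ (j,x)) else 0)" by simp
    finally show ?thesis .
  qed
  have c3: "U * proj n x * dag U * proj n y \<in> carrier_mat ?N ?N" by (rule mult_carrier_mat[OF c2 proj_carrier])
  have e3: "(U * proj n x * dag U * proj n y) $$ (i,i) = (if i = y then (U * proj n x * dag U) $$ (i,y) else 0)" if "i < ?N" for i
  proof -
    have "(U * proj n x * dag U * proj n y) $$ (i,i) = (\<Sum>k<?N. (U * proj n x * dag U) $$ (i,k) * proj n y $$ (k,i))"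
      by (rule mult_entry[OF c2 proj_carrier that that])
    also have "\<dots> = (\<Sum>k<?N. if k = y then (if i = y then (U * proj n x * dag U) $$ (i,y) else 0) else 0)"
      using that by (intro sum.cong) (auto simp: proj_entry)
    also have "\<dots> = (if i = y then (U * proj n x * dag U) $$ (i,y) else 0)" using that by simp
    finally show ?thesis .
  qed
  have "mtrace (U * proj n x * dag U * proj n y) = (\<Sum>i<?N. (if i = y then (U * proj n x * dag U) $$ (i,y) else 0))"
  proof -
    have d: "dim_row (U * proj n x * dag U * proj n y) = ?N" using c3 U by simp
    show ?thesis unfolding mtrace_def d by (intro sum.cong refl) (simp add: e3)
  qed
  also have "\<dots> = (if y < ?N then (U * proj n x * dag U) $$ (y,y) else 0)" by simp
  also have "\<dots> = (if x < ?N \<and> y < ?N then U $$ (y,x) * cnj (U $$ (y,x)) else 0)" using e2 by auto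
  finally show ?thesis unfolding fch_def
    by (auto simp: complex_norm_square[symmetric])
qed
lemma bdot_exp: "i < n \<Longrightarrow> bdot n (2^i) x = (if bit x i then 1 else 0)"
proof -
  assume i: "i < n"
  have "{j. j < n \<and> bit (and (2^i) x) j} = (if bit x i then {i} else {})"
    using i by (auto simp: bit_and_iff bit_exp_iff)
  then show ?thesis unfolding bdot_def by simp
qed

lemma bdot_zero: "bdot n 0 x = 0"
  unfolding bdot_def by simp

lemma xor_lt: "x < 2^n \<Longrightarrow> i < n \<Longrightarrow> xor x (2^i) < (2::nat)^n"
proof -
  assume a: "x < 2^n" "i < n"
  have t1: "take_bit n x = x" using a(1) by (simp add: take_bit_nat_eq_self_iff)
  have t2: "take_bit n (2^i) = (2::nat)^i" using a(2) by (simp add: take_bit_nat_eq_self_iff)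
  have "take_bit n (xor x (2^i)) = xor x (2^i)"
    by (simp only: take_bit_xor t1 t2)
  then show ?thesis by (metis take_bit_nat_eq_self_iff)
qed

lemma Z_entry: "y < 2^n \<Longrightarrow> x < 2^n \<Longrightarrow> i < n \<Longrightarrow>
  pauli n 0 (2^i) $$ (y,x) = (if y = x then (if bit x i then -1 else 1) else 0)"
  by (simp add: pauli_entry bdot_exp)

lemma X_entry: "y < 2^n \<Longrightarrow> x < 2^n \<Longrightarrow>
  pauli n (2^i) 0 $$ (y,x) = (if y = xor x (2^i) then 1 else 0)"
  by (simp add: pauli_entry bdot_zero)

lemma unitary_col: assumes "unitary N U" "x < N" shows "(\<Sum>k<N. (cmod (U $$ (k,x)))^2) = 1"
proof -
  have U: "U \<in> carrier_mat N N" using assms unfolding unitary_def by auto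
  have "(dag U * U) $$ (x,x) = 1" using assms unfolding unitary_def by auto
  moreover have "(dag U * U) $$ (x,x) = (\<Sum>k<N. dag U $$ (x,k) * U $$ (k,x))"
    by (rule mult_entry[OF dag_carrier[OF U] U assms(2) assms(2)])
  moreover have "\<dots> = (\<Sum>k<N. complex_of_real ((cmod (U $$ (k,x)))^2))"
  proof (intro sum.cong refl)
    fix k assume "k \<in> {..<N}"
    then have "dag U $$ (x,k) = cnj (U $$ (k,x))" using U assms(2) by (simp add: dag_entry)
    then show "dag U $$ (x,k) * U $$ (k,x) = complex_of_real ((cmod (U $$ (k,x)))^2)"
      by (metis complex_norm_square mult.commute)
  qed
  ultimately have "complex_of_real (\<Sum>k<N. (cmod (U $$ (k,x)))^2) = 1" by simp
  then show ?thesis by (metis of_real_eq_1_iff)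
qed

lemma unitary_entry_le: assumes "unitary N U" "x < N" "y < N" shows "(cmod (U $$ (y,x)))^2 \<le> 1"
proof -
  have "(cmod (U $$ (y,x)))^2 \<le> (\<Sum>k<N. (cmod (U $$ (k,x)))^2)"
    using assms(3) by (intro member_le_sum) auto
  then show ?thesis using unitary_col[OF assms(1,2)] by simp
qed

lemma fch_bounds: assumes "U \<in> clifford n" shows "0 \<le> fch n U z" "fch n U z \<le> 1"
proof -
  have u: "unitary (2^n) U" using assms unfolding clifford_def by auto
  then have U: "U \<in> carrier_mat (2^n) (2^n)" unfolding unitary_def by auto
  obtain x y where z: "z = (x,y)" by force
  show "0 \<le> fch n U z" unfolding z fch_formula[OF U] by simp
  show "fch n U z \<le> 1" unfolding z fch_formula[OF U] using unitary_entry_le[OF u] by simp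
qed
lemma xor_swap: "(y = xor k (a::nat)) \<longleftrightarrow> (k = xor y a)"
  by (metis xor.assoc xor_self_eq xor.right_neutral)

lemma bit_high: "x < 2^n \<Longrightarrow> n \<le> i \<Longrightarrow> \<not> bit (x::nat) i"
  by (metis bit_take_bit_iff not_less take_bit_nat_eq_self_iff)

lemma take_bit_Suc_xor: "take_bit (Suc j) (x::nat) = (if bit x j then xor (take_bit j x) (2^j) else take_bit j x)"
  by (rule bit_eqI) (auto simp: bit_take_bit_iff bit_xor_iff bit_exp_iff less_Suc_eq)

lemma commute_scalar:
  fixes W :: "complex mat"
  assumes W: "W \<in> carrier_mat (2^n) (2^n)"
  and X: "\<And>i. i<n \<Longrightarrow> W * pauli n (2^i) 0 = pauli n (2^i) 0 * W"
  and Z: "\<And>i. i<n \<Longrightarrow> W * pauli n 0 (2^i) = pauli n 0 (2^i) * W"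
  shows "\<And>x y. x<2^n \<Longrightarrow> y<2^n \<Longrightarrow> W $$ (y,x) = (if y = x then W $$ (0,0) else 0)"
proof -
  let ?N = "(2::nat)^n"
  have WZ: "(W * pauli n 0 (2^i)) $$ (y,x) = W $$ (y,x) * (if bit x i then -1 else 1)"
    if "y < ?N" "x < ?N" "i < n" for x y i
  proof -
    have "(W * pauli n 0 (2^i)) $$ (y,x) = (\<Sum>k<?N. W $$ (y,k) * pauli n 0 (2^i) $$ (k,x))"
      by (rule mult_entry[OF W pauli_carrier that(1,2)])
    also have "\<dots> = (\<Sum>k<?N. if k = x then W $$ (y,x) * (if bit x i then -1 else 1) else 0)"
      using that by (intro sum.cong refl) (simp add: Z_entry)
    also have "\<dots> = W $$ (y,x) * (if bit x i then -1 else 1)" using that by simp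
    finally show ?thesis .
  qed
  have ZW: "(pauli n 0 (2^i) * W) $$ (y,x) = (if bit y i then -1 else 1) * W $$ (y,x)"
    if "y < ?N" "x < ?N" "i < n" for x y i
  proof -
    have "(pauli n 0 (2^i) * W) $$ (y,x) = (\<Sum>k<?N. pauli n 0 (2^i) $$ (y,k) * W $$ (k,x))"
      by (rule mult_entry[OF pauli_carrier W that(1,2)])
    also have "\<dots> = (\<Sum>k<?N. if k = y then (if bit y i then -1 else 1) * W $$ (y,x) else 0)"
      using that by (intro sum.cong refl) (auto simp: Z_entry)
    also have "\<dots> = (if bit y i then -1 else 1) * W $$ (y,x)" using that by simp
    finally show ?thesis .
  qed
  have WX: "(W * pauli n (2^i) 0) $$ (y,x) = W $$ (y, xor x (2^i))"
    if "y < ?N" "x < ?N" "i < n" for x y i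
  proof -
    have "(W * pauli n (2^i) 0) $$ (y,x) = (\<Sum>k<?N. W $$ (y,k) * pauli n (2^i) 0 $$ (k,x))"
      by (rule mult_entry[OF W pauli_carrier that(1,2)])
    also have "\<dots> = (\<Sum>k<?N. if k = xor x (2^i) then W $$ (y, xor x (2^i)) else 0)"
      using that by (intro sum.cong refl) (auto simp: X_entry)
    also have "\<dots> = W $$ (y, xor x (2^i))" using that xor_lt[OF that(2,3)] by simp
    finally show ?thesis .
  qed
  have XW: "(pauli n (2^i) 0 * W) $$ (y,x) = W $$ (xor y (2^i), x)"
    if "y < ?N" "x < ?N" "i < n" for x y i
  proof -
    have "(pauli n (2^i) 0 * W) $$ (y,x) = (\<Sum>k<?N. pauli n (2^i) 0 $$ (y,k) * W $$ (k,x))"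
      by (rule mult_entry[OF pauli_carrier W that(1,2)])
    also have "\<dots> = (\<Sum>k<?N. if k = xor y (2^i) then W $$ (xor y (2^i), x) else 0)"
      using that by (intro sum.cong refl) (auto simp: X_entry xor_swap)
    also have "\<dots> = W $$ (xor y (2^i), x)" using that xor_lt[OF that(1,3)] by simp
    finally show ?thesis .
  qed
  have off: "W $$ (y,x) = 0" if yx: "y < ?N" "x < ?N" and ne: "y \<noteq> x" for x y
  proof -
    obtain i where i: "bit x i \<noteq> bit y i" using ne bit_eq_iff by metis
    have "i < n" using i bit_high yx by (metis not_less)
    have "W $$ (y,x) * (if bit x i then -1 else 1) = (if bit y i then -1 else 1) * W $$ (y,x)"
      using WZ[OF yx \<open>i<n\<close>] ZW[OF yx \<open>i<n\<close>] Z[OF \<open>i<n\<close>] by metis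
    then show ?thesis using i by (cases "bit x i"; cases "bit y i") auto
  qed
  have diag_step: "W $$ (xor x (2^i), xor x (2^i)) = W $$ (x,x)" if "x < ?N" "i < n" for x i
  proof -
    have "W $$ (xor x (2^i), xor x (2^i)) = (W * pauli n (2^i) 0) $$ (xor x (2^i), x)"
      using WX[OF xor_lt[OF that] that] by simp
    also have "\<dots> = (pauli n (2^i) 0 * W) $$ (xor x (2^i), x)" using X[OF that(2)] by simp
    also have "\<dots> = W $$ (x,x)" using XW[OF xor_lt[OF that] that] by (simp add: xor.assoc)
    finally show ?thesis .
  qed
  have diag: "W $$ (take_bit j x, take_bit j x) = W $$ (0,0)" if "x < ?N" for x j
  proof (induction j)
    case 0 then show ?case by simp
  next
    case (Suc j)
    show ?case
    proof (cases "bit x j")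
      case True
      then have "j < n" using bit_high that by (metis not_less)
      have "take_bit j x < ?N" using that by (meson le_less_trans take_bit_nat_less_eq_self)
      then show ?thesis using True Suc diag_step[OF _ \<open>j<n\<close>] by (simp add: take_bit_Suc_xor)
    next
      case False then show ?thesis using Suc by (simp add: take_bit_Suc_xor)
    qed
  qed
  fix x y assume "x < ?N" "y < ?N"
  then show "W $$ (y,x) = (if y = x then W $$ (0,0) else 0)"
    using off diag[of x n] by (auto simp: take_bit_nat_eq_self)
qed
lemma sq_assoc: "A \<in> carrier_mat N N \<Longrightarrow> B \<in> carrier_mat N N \<Longrightarrow> C \<in> carrier_mat N N \<Longrightarrow> A * B * C = A * (B * C)"
  by (rule assoc_mult_mat)

lemma commute_from_conj:
  fixes U V P :: "complex mat"
  assumes U: "U \<in> carrier_mat N N" and V: "V \<in> carrier_mat N N" and P: "P \<in> carrier_mat N N"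
  and uU: "dag U * U = 1\<^sub>m N" and vV: "dag V * V = 1\<^sub>m N"
  and H: "U * P * dag U = V * P * dag V"
  shows "dag V * U * P = P * (dag V * U)"
proof -
  have dU: "dag U \<in> carrier_mat N N" and dV: "dag V \<in> carrier_mat N N" using U V by (auto intro: dag_carrier)
  note cs = U V P dU dV mult_carrier_mat
  have "U * P = U * P * (dag U * U)" using U P by (simp add: uU)
  also have "\<dots> = (U * P * dag U) * U" using cs by (simp add: sq_assoc)
  also have "\<dots> = (V * P * dag V) * U" by (simp add: H)
  finally have UP: "U * P = V * P * dag V * U" .
  have "dag V * U * P = dag V * (U * P)" using cs by (simp add: sq_assoc)
  also have "\<dots> = dag V * (V * P * dag V * U)" by (simp add: UP)
  also have "\<dots> = (dag V * V) * P * (dag V * U)" using cs by (simp add: sq_assoc)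
  also have "\<dots> = P * (dag V * U)" using P by (simp add: vV)
  finally show ?thesis .
qed
definition gens :: "nat \<Rightarrow> nat \<Rightarrow> complex mat" where
  "gens n i = (if i < n then pauli n (2^i) 0 else pauli n 0 (2^(i-n)))"

definition phi :: "nat \<Rightarrow> complex mat \<Rightarrow> nat \<Rightarrow> complex mat" where
  "phi n U = (\<lambda>i\<in>{..<2*n}. U * gens n i * dag U)"

lemma fch_eq:
  assumes U: "U \<in> clifford n" and V: "V \<in> clifford n" and ph: "phi n U = phi n V"
  shows "fch n U = fch n V"
proof -
  let ?N = "(2::nat)^n"
  have uu: "unitary ?N U" "unitary ?N V" using U V unfolding clifford_def by auto
  then have Uc: "U \<in> carrier_mat ?N ?N" and Vc: "V \<in> carrier_mat ?N ?N"
    and uU: "dag U * U = 1\<^sub>m ?N" and vV: "dag V * V = 1\<^sub>m ?N" and Vv: "V * dag V = 1\<^sub>m ?N"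
    unfolding unitary_def by auto
  define W where "W = dag V * U"
  have Wc: "W \<in> carrier_mat ?N ?N" unfolding W_def by (rule mult_carrier_mat[OF dag_carrier[OF Vc] Uc])
  have conj: "U * gens n i * dag U = V * gens n i * dag V" if "i < 2*n" for i
    using fun_cong[OF ph, of i] that unfolding phi_def by simp
  have X: "W * pauli n (2^i) 0 = pauli n (2^i) 0 * W" if "i < n" for i
    unfolding W_def
    by (rule commute_from_conj[OF Uc Vc pauli_carrier uU vV]) (use conj[of i] that in \<open>simp add: gens_def\<close>)
  have Z: "W * pauli n 0 (2^i) = pauli n 0 (2^i) * W" if "i < n" for i
    unfolding W_def
    by (rule commute_from_conj[OF Uc Vc pauli_carrier uU vV]) (use conj[of "n+i"] that in \<open>simp add: gens_def\<close>)
  define c where "c = W $$ (0,0)"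
  have Wd: "W $$ (y,x) = (if y = x then c else 0)" if "x < ?N" "y < ?N" for x y
    using commute_scalar[OF Wc X Z that] unfolding c_def by simp
  have "V * W = (V * dag V) * U" unfolding W_def using Uc Vc dag_carrier[OF Vc] by (simp add: sq_assoc)
  then have VW: "V * W = U" using Uc by (simp add: Vv)
  have Ue: "U $$ (y,x) = V $$ (y,x) * c" if "x < ?N" "y < ?N" for x y
  proof -
    have "U $$ (y,x) = (\<Sum>k<?N. V $$ (y,k) * W $$ (k,x))"
      using mult_entry[OF Vc Wc that(2,1)] VW by simp
    also have "\<dots> = (\<Sum>k<?N. if k = x then V $$ (y,x) * c else 0)"
      using that by (intro sum.cong refl) (auto simp: Wd)
    also have "\<dots> = V $$ (y,x) * c" using that by simp
    finally show ?thesis .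
  qed
  have "(1::real) = (\<Sum>k<?N. (cmod (U $$ (k,0)))^2)" using unitary_col[OF uu(1), of 0] by simp
  also have "\<dots> = (\<Sum>k<?N. (cmod (V $$ (k,0)))^2 * (cmod c)^2)"
    by (intro sum.cong refl) (simp add: Ue norm_mult power_mult_distrib)
  also have "\<dots> = (cmod c)^2" using unitary_col[OF uu(2), of 0] by (simp add: sum_distrib_right[symmetric])
  finally have c1: "(cmod c)^2 = 1" by simp
  show ?thesis
  proof
    fix z :: "nat \<times> nat"
    obtain x y where z: "z = (x,y)" by force
    show "fch n U z = fch n V z"
      unfolding z fch_formula[OF Uc] fch_formula[OF Vc]
      by (simp add: Ue norm_mult power_mult_distrib c1)
  qed
qed
lemma one_smult_mat': "(1::complex) \<cdot>\<^sub>m A = A"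
  by (rule eq_matI) auto

lemma pauli_group_img: "pauli_group n = (\<lambda>(k,a,b). (\<i> ^ k) \<cdot>\<^sub>m pauli n a b) ` ({..<4} \<times> {..<2^n} \<times> {..<2^n})"
  unfolding pauli_group_def by force

lemma pauli_group_card: "finite (pauli_group n) \<and> card (pauli_group n) \<le> 2^(2*n+2)"
proof -
  have "card (pauli_group n) \<le> card ({..<4::nat} \<times> {..<(2::nat)^n} \<times> {..<(2::nat)^n})"
    unfolding pauli_group_img by (rule card_image_le) auto
  also have "\<dots> = 4 * (2^n * 2^n)" by (simp add: card_cartesian_product)
  also have "\<dots> = 2^(2*n+2)"
  proof -
    have "(2::nat)^(2*n+2) = 2^n * 2^n * 2^2" by (simp only: mult_2 power_add)
    then show ?thesis by simp
  qed
  finally show ?thesis unfolding pauli_group_img by auto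
qed

lemma gens_in: "i < 2*n \<Longrightarrow> gens n i \<in> pauli_group n"
proof -
  assume i: "i < 2*n"
  show ?thesis
  proof (cases "i < n")
    case True
    then have g: "gens n i = (\<i> ^ 0) \<cdot>\<^sub>m pauli n (2^i) 0" by (simp add: gens_def one_smult_mat')
    have "(2::nat)^i < 2^n" using True by simp
    then show ?thesis unfolding g pauli_group_def
      by (rule_tac CollectI, rule_tac exI[of _ 0], rule_tac exI[of _ "2^i"], rule_tac exI[of _ 0]) auto
  next
    case False
    then have g: "gens n i = (\<i> ^ 0) \<cdot>\<^sub>m pauli n 0 (2^(i-n))" by (simp add: gens_def one_smult_mat')
    have "(2::nat)^(i-n) < 2^n" using i by simp
    then show ?thesis unfolding g pauli_group_def
      by (rule_tac CollectI, rule_tac exI[of _ 0], rule_tac exI[of _ 0], rule_tac exI[of _ "2^(i-n)"]) auto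
  qed
qed

lemma phi_in: "U \<in> clifford n \<Longrightarrow> phi n U \<in> {..<2*n} \<rightarrow>\<^sub>E pauli_group n"
  unfolding phi_def clifford_def using gens_in by auto

lemma dag_one: "dag (1\<^sub>m N) = (1\<^sub>m N :: complex mat)"
  by (rule eq_matI) (auto simp: dag_def)

lemma pauli_group_carrier: "P \<in> pauli_group n \<Longrightarrow> P \<in> carrier_mat (2^n) (2^n)"
  unfolding pauli_group_def by (auto simp: pauli_def)

lemma one_clifford: "1\<^sub>m (2^n) \<in> clifford n"
  unfolding clifford_def unitary_def
  apply (auto simp: dag_one)
  subgoal for P using pauli_group_carrier[of P n] by (metis left_mult_one_mat right_mult_one_mat)
  done

lemma F_stab_card: "finite (F_stab n) \<and> card (F_stab n) \<le> 2^(4*n*(n+1)) \<and> F_stab n \<noteq> {}"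
proof -
  define h where "h p = fch n (SOME U. U \<in> clifford n \<and> phi n U = p)" for p
  have eq: "F_stab n = h ` (phi n ` clifford n)"
  proof -
    have "h (phi n U) = fch n U" if "U \<in> clifford n" for U
    proof -
      have "\<exists>V. V \<in> clifford n \<and> phi n V = phi n U" using that by blast
      then have "(SOME V. V \<in> clifford n \<and> phi n V = phi n U) \<in> clifford n \<and> phi n (SOME V. V \<in> clifford n \<and> phi n V = phi n U) = phi n U"
        by (rule someI_ex)
      then show ?thesis unfolding h_def using fch_eq that by metis
    qed
    then show ?thesis unfolding F_stab_def image_image by (intro image_cong refl) auto
  qed
  let ?P = "{..<2*n} \<rightarrow>\<^sub>E pauli_group n"
  have sub: "phi n ` clifford n \<subseteq> ?P" using phi_in by auto
  have fin: "finite ?P" using pauli_group_card by (intro finite_PiE) auto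
  have "card (F_stab n) \<le> card (phi n ` clifford n)" unfolding eq by (rule card_image_le) (rule finite_subset[OF sub fin])
  also have "\<dots> \<le> card ?P" by (rule card_mono[OF fin sub])
  also have "\<dots> = card (pauli_group n) ^ (2*n)" by (simp add: card_PiE)
  also have "\<dots> \<le> (2^(2*n+2)) ^ (2*n)" using pauli_group_card by (intro power_mono) auto
  also have "\<dots> = 2^((2*n+2)*(2*n))" by (simp only: power_mult)
  also have "\<dots> = 2^(4*n*(n+1))" by (rule arg_cong[where f="\<lambda>k. (2::nat)^k"]) (simp add: algebra_simps)
  finally show ?thesis using eq finite_subset[OF sub fin] one_clifford[of n] by (auto simp: F_stab_def)
qed
lemma cosh_bound_nn: fixes a :: real assumes "0 \<le> a" shows "(exp a + exp (-a))/2 \<le> exp (a^2/2)"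
proof -
  have h: "-(2*a) * (1/2) + ln (1 + (1/2) * (exp (2*a) - 1)) \<le> (2*a)^2/8"
    by (rule Hoeffdings_lemma_aux) (use assms in auto)
  have e: "1 + (1/2) * (exp (2*a) - 1) = exp a * ((exp a + exp (-a))/2)"
    by (simp add: field_simps exp_minus flip: exp_add)
  have pos: "0 < (exp a + exp (-a))/2" by (simp add: add_pos_pos)
  have "ln (1 + (1/2) * (exp (2*a) - 1)) = a + ln ((exp a + exp (-a))/2)"
    unfolding e ln_mult using pos by simp
  with h have "ln ((exp a + exp (-a))/2) \<le> a^2/2" by (simp add: power2_eq_square)
  then show ?thesis using pos by (metis exp_le_cancel_iff exp_ln)
qed

lemma cosh_bound: fixes t :: real shows "(exp t + exp (-t))/2 \<le> exp (t^2/2)"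
proof (cases "0 \<le> t")
  case True then show ?thesis by (rule cosh_bound_nn)
next
  case False
  then have "(exp (-t) + exp (-(-t)))/2 \<le> exp ((-t)^2/2)" by (intro cosh_bound_nn) auto
  then show ?thesis by (simp add: add.commute)
qed

lemma jensen_exp:
  fixes y :: "'a \<Rightarrow> real"
  assumes "finite A" "A \<noteq> {}"
  shows "real (card A) * exp ((\<Sum>a\<in>A. y a) / real (card A)) \<le> (\<Sum>a\<in>A. exp (y a))"
proof -
  define \<mu> where "\<mu> = (\<Sum>a\<in>A. y a) / real (card A)"
  have K: "real (card A) > 0" using assms by (simp add: card_gt_0_iff)
  have "exp \<mu> * (1 + (y a - \<mu>)) \<le> exp (y a)" for a
  proof -
    have "exp \<mu> * (1 + (y a - \<mu>)) \<le> exp \<mu> * exp (y a - \<mu>)"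
      by (intro mult_left_mono exp_ge_add_one_self) auto
    also have "\<dots> = exp (y a)" by (simp flip: exp_add)
    finally show ?thesis .
  qed
  then have "(\<Sum>a\<in>A. exp \<mu> * (1 + (y a - \<mu>))) \<le> (\<Sum>a\<in>A. exp (y a))"
    by (intro sum_mono)
  moreover have "(\<Sum>a\<in>A. exp \<mu> * (1 + (y a - \<mu>))) = exp \<mu> * (real (card A) + (\<Sum>a\<in>A. y a) - real (card A) * \<mu>)"
    by (simp add: sum_distrib_left[symmetric] sum.distrib sum_subtractf)
  moreover have "real (card A) * \<mu> = (\<Sum>a\<in>A. y a)" unfolding \<mu>_def using K by simp
  ultimately show ?thesis unfolding \<mu>_def by (simp add: mult.commute)
qed
lemma exp_sum_prod_PiE:
  fixes a :: "nat \<Rightarrow> real"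
  shows "(\<Sum>\<epsilon>\<in>{..<m} \<rightarrow>\<^sub>E {-1, 1::real}. exp (l * (\<Sum>i<m. \<epsilon> i * a i)))
       = (\<Prod>i<m. exp (l * a i) + exp (- (l * a i)))"
proof -
  have "(\<Prod>i<m. exp (l * a i) + exp (- (l * a i))) = (\<Prod>i<m. \<Sum>e\<in>{-1, 1::real}. exp (l * (e * a i)))"
    by (intro prod.cong refl) (simp add: add.commute)
  also have "\<dots> = (\<Sum>\<epsilon>\<in>{..<m} \<rightarrow>\<^sub>E {-1, 1::real}. \<Prod>i<m. exp (l * (\<epsilon> i * a i)))"
    by (rule prod_sum_PiE) auto
  also have "\<dots> = (\<Sum>\<epsilon>\<in>{..<m} \<rightarrow>\<^sub>E {-1, 1::real}. exp (l * (\<Sum>i<m. \<epsilon> i * a i)))"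
    by (intro sum.cong refl) (simp add: exp_sum sum_distrib_left)
  finally show ?thesis by simp
qed

lemma massart:
  fixes zs :: "(nat \<times> nat) list" and G :: "(nat \<times> nat \<Rightarrow> real) set" and l B :: real
  assumes m: "length zs = m" "0 < m" and fin: "finite G" "G \<noteq> {}"
    and bd: "\<And>g i. g \<in> G \<Longrightarrow> i < m \<Longrightarrow> \<bar>g (zs ! i)\<bar> \<le> B" and lam: "0 < l"
  shows "emp_rademacher zs G \<le> ln (real (card G)) / (l * m) + l * B^2 / 2"
proof -
  define P where "P = {..<m} \<rightarrow>\<^sub>E {-1, 1::real}"
  define X where "X g \<epsilon> = (\<Sum>i<m. \<epsilon> i * g (zs ! i))" for g :: "nat \<times> nat \<Rightarrow> real" and \<epsilon> :: "nat \<Rightarrow> real"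
  define S where "S \<epsilon> = (SUP g\<in>G. (1 / real m) * X g \<epsilon>)" for \<epsilon>
  have finP: "finite P" "P \<noteq> {}" unfolding P_def by (auto simp: PiE_eq_empty_iff intro!: finite_PiE)
  have cardP: "card P = 2^m" unfolding P_def by (simp add: card_PiE numeral_2_eq_2)
  have emp: "emp_rademacher zs G = (\<Sum>\<epsilon>\<in>P. S \<epsilon>) / 2^m"
    unfolding emp_rademacher_def P_def S_def X_def m(1) ..
  have B0: "0 \<le> B" using bd[of _ 0] fin(2) m(2) by (meson abs_ge_zero all_not_in_conv order.trans)
  have Sexp: "exp (l * m * S \<epsilon>) \<le> (\<Sum>g\<in>G. exp (l * X g \<epsilon>))" for \<epsilon>
  proof -
    have "S \<epsilon> = Max ((\<lambda>g. (1 / real m) * X g \<epsilon>) ` G)"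
      unfolding S_def using fin by (intro cSup_eq_Max) auto
    also have "\<dots> \<in> (\<lambda>g. (1 / real m) * X g \<epsilon>) ` G" using fin by (intro Max_in) auto
    finally obtain g where g: "g \<in> G" "S \<epsilon> = (1 / real m) * X g \<epsilon>" by blast
    have "exp (l * m * S \<epsilon>) = exp (l * X g \<epsilon>)" using g(2) m(2) by simp
    also have "\<dots> \<le> (\<Sum>g\<in>G. exp (l * X g \<epsilon>))"
      using fin g(1) by (intro member_le_sum) auto
    finally show ?thesis .
  qed
  have Xbound: "(\<Sum>\<epsilon>\<in>P. exp (l * X g \<epsilon>)) \<le> 2^m * exp (l^2 * B^2 / 2) ^ m" if g: "g \<in> G" for g
  proof -
    have "(\<Sum>\<epsilon>\<in>P. exp (l * X g \<epsilon>)) = (\<Prod>i<m. exp (l * g (zs ! i)) + exp (- (l * g (zs ! i))))"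
      unfolding P_def X_def by (rule exp_sum_prod_PiE)
    also have "\<dots> \<le> (\<Prod>i<m. 2 * exp (l^2 * B^2 / 2))"
    proof (intro prod_mono conjI)
      fix i assume i: "i \<in> {..<m}"
      show "0 \<le> exp (l * g (zs ! i)) + exp (- (l * g (zs ! i)))" by (intro add_nonneg_nonneg) auto
      have "(l * g (zs ! i))^2 \<le> (l * B)^2"
        using bd[OF g, of i] i lam B0 by (simp add: abs_le_square_iff[symmetric] abs_mult mult_left_mono)
      then have "exp ((l * g (zs ! i))^2 / 2) \<le> exp (l^2 * B^2 / 2)" by (simp add: power_mult_distrib)
      with cosh_bound[of "l * g (zs ! i)"]
      have "(exp (l * g (zs ! i)) + exp (- (l * g (zs ! i)))) / 2 \<le> exp (l^2 * B^2 / 2)"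
        by (rule order.trans)
      then show "exp (l * g (zs ! i)) + exp (- (l * g (zs ! i))) \<le> 2 * exp (l^2 * B^2 / 2)"
        by (simp only: field_simps)
    qed
    also have "\<dots> = 2^m * exp (l^2 * B^2 / 2) ^ m" by (simp add: power_mult_distrib)
    finally show ?thesis .
  qed
  have "real (card P) * exp ((\<Sum>\<epsilon>\<in>P. l * m * S \<epsilon>) / real (card P)) \<le> (\<Sum>\<epsilon>\<in>P. exp (l * m * S \<epsilon>))"
    by (rule jensen_exp[OF finP])
  also have "\<dots> \<le> (\<Sum>\<epsilon>\<in>P. \<Sum>g\<in>G. exp (l * X g \<epsilon>))" by (intro sum_mono Sexp)
  also have "\<dots> = (\<Sum>g\<in>G. \<Sum>\<epsilon>\<in>P. exp (l * X g \<epsilon>))" by (rule sum.swap)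
  also have "\<dots> \<le> (\<Sum>g\<in>G. 2^m * exp (l^2 * B^2 / 2) ^ m)" by (intro sum_mono Xbound)
  also have "\<dots> = real (card G) * 2^m * exp (l^2 * B^2 / 2) ^ m" by simp
  also have "exp (l^2 * B^2 / 2) ^ m = exp (m * (l^2 * B^2 / 2))" by (rule exp_of_nat_mult[symmetric])
  finally have "2^m * exp (l * m * emp_rademacher zs G) \<le> 2^m * (real (card G) * exp (m * (l^2 * B^2 / 2)))"
    unfolding emp cardP by (simp add: sum_distrib_left[symmetric] mult_ac)
  then have "exp (l * m * emp_rademacher zs G) \<le> real (card G) * exp (m * (l^2 * B^2 / 2))" by simp
  also have "\<dots> = exp (ln (real (card G)) + m * (l^2 * B^2 / 2))"
    using fin by (simp add: exp_add card_gt_0_iff)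
  finally have "l * m * emp_rademacher zs G \<le> ln (real (card G)) + m * (l^2 * B^2 / 2)" by simp
  then have "emp_rademacher zs G \<le> (ln (real (card G)) + m * (l^2 * B^2 / 2)) / (l * m)"
    using lam m(2) by (simp add: field_simps)
  also have "\<dots> = ln (real (card G)) / (l * m) + l * B^2 / 2"
    using lam m(2) by (simp add: field_simps power2_eq_square)
  finally show ?thesis .
qed
lemma sup_norm_bounds:
  assumes "U \<in> clifford n" "length zs = m" "0 < m"
  shows "\<And>i. i < m \<Longrightarrow> \<bar>fch n U (zs ! i)\<bar> \<le> sup_norm_on zs (fch n U)"
    and "sup_norm_on zs (fch n U) \<le> 1"
proof -
  fix i assume "i < m"
  then show "\<bar>fch n U (zs ! i)\<bar> \<le> sup_norm_on zs (fch n U)"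
    unfolding sup_norm_on_def using assms by (intro Max_ge) auto
next
  show "sup_norm_on zs (fch n U) \<le> 1"
  proof -
    have fa: "\<And>i. \<bar>fch n U (zs ! i)\<bar> \<le> 1" using fch_bounds[OF assms(1)] by (metis abs_of_nonneg)
    show ?thesis unfolding sup_norm_on_def
      apply (intro Max.boundedI)
      using assms(2,3) fa by auto
  qed
qed

lemma le_zero_from_bound:
  fixes x a b :: real
  assumes a: "a \<le> 0" and b: "0 \<le> b" and H: "\<And>l. 0 < l \<Longrightarrow> x \<le> a / l + l * b"
  shows "x \<le> 0"
proof (rule ccontr)
  assume "\<not> x \<le> 0" then have x: "0 < x" by simp
  show False
  proof (cases "b = 0")
    case True
    then show False using H[of 1] a x by simp
  next
    case False
    then have bp: "0 < b" using b by simp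
    define l where "l = x / (2 * b)"
    have lp: "0 < l" unfolding l_def using x bp by simp
    have "a / l \<le> 0" using a lp by (simp add: divide_nonpos_pos)
    then have "x \<le> l * b" using H[OF lp] by simp
    also have "\<dots> = x / 2" unfolding l_def using bp by simp
    finally show False using x by simp
  qed
qed

lemma le_zero_from_bound2:
  fixes x a :: real
  assumes a: "0 \<le> a" and H: "\<And>l. 0 < l \<Longrightarrow> x \<le> a / l"
  shows "x \<le> 0"
proof (rule ccontr)
  assume "\<not> x \<le> 0" then have x: "0 < x" by simp
  define l where "l = (a + 1) / x"
  have lp: "0 < l" unfolding l_def using x a by simp
  have "x \<le> a / l" by (rule H[OF lp])
  also have "\<dots> = a * x / (a + 1)" unfolding l_def using a by simp
  also have "\<dots> < x" using x a by (simp add: field_simps)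
  finally show False by simp
qed

theorem mainTheorem6:
  shows "\<exists>\<eta> :: nat \<Rightarrow> real. \<eta> \<longlonglongrightarrow> 0 \<and>
    (\<forall>n m (zs :: (nat \<times> nat) list).
       0 < m \<longrightarrow> length zs = m \<longrightarrow>
       (\<forall>z \<in> set zs. fst z < 2^n \<and> snd z < 2^n) \<longrightarrow>
       emp_rademacher zs (F_stab n)
         \<le> 4 * ((1 + \<eta> n) * real n / sqrt (real m))
             * (SUP U \<in> clifford n. sup_norm_on zs (fch n U)))"
proof (intro exI[of _ "\<lambda>_. 0"] conjI allI impI)
  show "(\<lambda>_. 0::real) \<longlonglongrightarrow> 0" by simp
  fix n m :: nat and zs :: "(nat \<times> nat) list"
  assume m: "0 < m" and len: "length zs = m"
  define B where "B = (SUP U \<in> clifford n. sup_norm_on zs (fch n U))"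
  define G where "G = F_stab n"
  have Gc: "finite G" "card G \<le> 2^(4*n*(n+1))" "G \<noteq> {}" using F_stab_card[of n] unfolding G_def by auto
  have bdd: "bdd_above ((\<lambda>U. sup_norm_on zs (fch n U)) ` clifford n)"
    using sup_norm_bounds(2)[OF _ len m] by (intro bdd_aboveI2) auto
  have bd: "\<bar>g (zs ! i)\<bar> \<le> B" if gG: "g \<in> G" and im: "i < m" for g i
  proof -
    obtain U where U: "U \<in> clifford n" "g = fch n U" using gG unfolding G_def F_stab_def by blast
    have "\<bar>g (zs ! i)\<bar> \<le> sup_norm_on zs (fch n U)" using sup_norm_bounds(1)[OF U(1) len m im] U(2) by simp
    also have "\<dots> \<le> B" unfolding B_def by (rule cSUP_upper[OF U(1) bdd])
    finally show ?thesis .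
  qed
  have B0: "0 \<le> B" using bd Gc(3) m by (meson abs_ge_zero all_not_in_conv order.trans)
  have mass: "emp_rademacher zs G \<le> ln (real (card G)) / (l * m) + l * B^2 / 2" if "0 < l" for l :: real
    using massart[of zs m G B l] len m Gc(1) Gc(3) bd that by blast
  have cardpos: "0 < real (card G)" using Gc by (simp add: card_gt_0_iff)
  have lnpos: "0 \<le> ln (real (card G))" using Gc(1,3) by (simp add: Suc_le_eq card_gt_0_iff)
  have lnN: "ln (real (card G)) \<le> real (4*n*(n+1))"
  proof -
    have "ln (real (card G)) \<le> ln (real ((2::nat)^(4*n*(n+1))))"
      using cardpos Gc(2) by (subst ln_le_cancel_iff) auto
    also have "\<dots> = real (4*n*(n+1)) * ln 2" by (simp add: ln_realpow)
    also have "\<dots> \<le> real (4*n*(n+1))" using ln_2_less_1 by (intro mult_left_le) auto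
    finally show ?thesis .
  qed
  show "emp_rademacher zs (F_stab n) \<le> 4 * ((1 + 0) * real n / sqrt (real m)) * B"
  proof (cases "B = 0 \<or> n = 0")
    case True
    have "emp_rademacher zs G \<le> 0"
    proof (cases "B = 0")
      case True
      show ?thesis
      proof (rule le_zero_from_bound2[of "ln (real (card G)) / real m"])
        show "0 \<le> ln (real (card G)) / real m" using lnpos by simp
        fix l :: real assume l: "0 < l"
        have e: "ln (real (card G)) / (l * real m) = ln (real (card G)) / real m / l" by (simp add: mult.commute)
        show "emp_rademacher zs G \<le> ln (real (card G)) / real m / l" using mass[OF l] True e by simp
      qed
    next
      case False
      with \<open>B = 0 \<or> n = 0\<close> have "n = 0" by simp
      then have "card G = 1" using Gc by (simp add: le_Suc_eq card_gt_0_iff)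
      then have ln0: "ln (real (card G)) = 0" by simp
      show ?thesis
      proof (rule le_zero_from_bound[of 0 "B^2/2"])
        show "(0::real) \<le> 0" by simp
        show "0 \<le> B^2/2" by simp
        fix l :: real assume l: "0 < l"
        show "emp_rademacher zs G \<le> 0 / l + l * (B^2/2)" using mass[OF l] ln0 by simp
      qed
    qed
    then show ?thesis using True unfolding G_def by auto
  next
    case False
    then have Bp: "0 < B" and np: "0 < n" using B0 by auto
    define s where "s = sqrt (real m)"
    have sp: "0 < s" unfolding s_def using m by simp
    have ss: "s * s = real m" unfolding s_def using m by simp
    define l where "l = 4 * real n / (B * s)"
    have lp: "0 < l" unfolding l_def using Bp sp np by simp
    have "emp_rademacher zs G \<le> ln (real (card G)) / (l * m) + l * B^2 / 2" by (rule mass[OF lp])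
    moreover have "ln (real (card G)) / (l * m) \<le> real (4*n*(n+1)) / (l * m)"
      using lnN lp m by (intro divide_right_mono) auto
    moreover have "real (4*n*(n+1)) \<le> 8 * real n * real n"
    proof -
      have "real (4*n*(n+1)) = 4 * real n * real n + 4 * real n" by (simp add: algebra_simps)
      moreover have "real n \<le> real n * real n"
      proof -
        have "1 \<le> real n" using np by simp
        then show ?thesis using mult_left_mono[of 1 "real n" "real n"] by simp
      qed
      ultimately show ?thesis by linarith
    qed
    then have "real (4*n*(n+1)) / (l * m) \<le> 8 * real n * real n / (l * m)"
      using lp m by (intro divide_right_mono) auto
    ultimately have "emp_rademacher zs G \<le> 8 * real n * real n / (l * m) + l * B^2 / 2" by linarith
    also have "8 * real n * real n / (l * m) + l * B^2 / 2 = 4 * real n / s * B"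
      unfolding l_def using Bp sp np by (simp add: field_simps ss[symmetric] power2_eq_square)
    finally show ?thesis unfolding G_def s_def by simp
  qed
qed
end
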